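(* Fix a subject entity $s$ and a finite set $E$ of candidate events for $s$, and define for $T\subseteq E$ $$\mathrm{Rel}(s,T)=\lambda\,\mathrm{ERel}(s,T)+(1-\lambda)\,\mathrm{DRel}(s,T),$$ where $$\mathrm{ERel}(s,T)=w^e_1\,\mathrm{E2E}(s,T)+w^e_2\,\mathrm{E2EPath}(T)+w^e_3\,\mathrm{G2E}(T),\qquad \mathrm{DRel}(s,T)=w^d_1\,\mathrm{E2D}(s,T)+w^d_2\,\mathrm{E2DPath}(T),$$ with $$\mathrm{E2E}(s,T)=\sum_{re\in\{\mathrm{RE}(e)\,:\,e\in T\}}\mathrm{E2ECooc}(s,re),\qquad \mathrm{G2E}(T)=\sum_{re\in\{\mathrm{RE}(e)\,:\,e\in T\}}\mathrm{GlobalImportance}(re),$$ $$\mathrm{E2EPath}(T)=\sum_{p\in\{\pi_{RE}(e)\,:\,e\in T\}}\ \operatorname*{average}_{e\in\mathcal{E},\ \pi_{RE}(e)=p}\mathrm{E2ECooc}(\mathrm{Sub}(e),\mathrm{RE}(e)),$$ $$\mathrm{E2D}(s,T)=\sum_{t\in\{\tau(e)\,:\,e\in T\}}\mathrm{E2DCooc}(s,t),\qquad \mathrm{E2DPath}(T)=\sum_{p\in\{\pi_{\tau}(e)\,:\,e\in T\}}\ \operatorname*{average}_{e\in\mathcal{E},\ \pi_{\tau}(e)=p}\mathrm{E2DCooc}(\mathrm{Sub}(e),\tau(e)),$$ where $0\le\lambda\le 1$ and $w^e_1,w^e_2,w^e_3,w^d_1,w^d_2\ge 0$. Then $f(T)=\mathrm{Rel}(s,T)$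 is a monotone submodular set function $f:2^E\to\mathbb{R}_{\ge 0}$.
   Context: Events: $\mathcal{E}$ is the (finite) set of all events over all subjects in a knowledge base, and $E\subseteq\mathcal{E}$ is the set of candidate events of the subject $s$. Each event $e$ has a subject $\mathrm{Sub}(e)$ (with $\mathrm{Sub}(e)=s$ for $e\in E$), a related entity $\mathrm{RE}(e)$, a timestamp $\tau(e)\in\mathbb{R}$, an entity path $\pi_{RE}(e)$ and a time path $\pi_\tau(e)$ (labels drawn from some set of path types). The sums range over sets (not multisets), so each distinct related entity, timestamp, or path is counted once. $\mathrm{E2ECooc}(x,y)$ and $\mathrm{E2DCooc}(x,t)$ are nonnegative real-valued co-occurrence scores between entities (resp. an entity and a date) — in the paper, normalized pointwise mutual information computed from web co-occurrence, with only positive values retained — and $\mathrm{GlobalImportance}(re)\ge 0$ is a nonnegative score of an entity (the fraction of search queries mentioning it). A set function $f$ on $2^E$ is submodular if $f(A\cup\{e\})-f(A)\ge f(B\cup\{e\})-f(B)$ for all $A\subseteq B\subseteq E$ and $e\in E\setminus B$, and monotone if $f(A)\le f(B)$ whenever $A\subseteq B$. *)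

theory Defs
  imports "HOL-Analysis.Analysis"
begin

definition average :: "'a set \<Rightarrow> ('a \<Rightarrow> real) \<Rightarrow> real" where
  "average A g = (\<Sum>x\<in>A. g x) / real (card A)"

definition E2E :: "('ent \<Rightarrow> 'ent \<Rightarrow> real) \<Rightarrow> ('ev \<Rightarrow> 'ent) \<Rightarrow> 'ent \<Rightarrow> 'ev set \<Rightarrow> real" where
  "E2E E2ECooc RE s T = (\<Sum>re\<in>RE ` T. E2ECooc s re)"

definition G2E :: "('ent \<Rightarrow> real) \<Rightarrow> ('ev \<Rightarrow> 'ent) \<Rightarrow> 'ev set \<Rightarrow> real" where
  "G2E GI RE T = (\<Sum>re\<in>RE ` T. GI re)"

definition E2EPath :: "'ev set \<Rightarrow> ('ent \<Rightarrow> 'ent \<Rightarrow> real) \<Rightarrow> ('ev \<Rightarrow> 'ent) \<Rightarrow> ('ev \<Rightarrow> 'ent)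
    \<Rightarrow> ('ev \<Rightarrow> 'p) \<Rightarrow> 'ev set \<Rightarrow> real" where
  "E2EPath Ev E2ECooc Sub RE piRE T =
     (\<Sum>p\<in>piRE ` T. average {e\<in>Ev. piRE e = p} (\<lambda>e. E2ECooc (Sub e) (RE e)))"

definition E2D :: "('ent \<Rightarrow> real \<Rightarrow> real) \<Rightarrow> ('ev \<Rightarrow> real) \<Rightarrow> 'ent \<Rightarrow> 'ev set \<Rightarrow> real" where
  "E2D E2DCooc tau s T = (\<Sum>t\<in>tau ` T. E2DCooc s t)"

definition E2DPath :: "'ev set \<Rightarrow> ('ent \<Rightarrow> real \<Rightarrow> real) \<Rightarrow> ('ev \<Rightarrow> 'ent) \<Rightarrow> ('ev \<Rightarrow> real)
    \<Rightarrow> ('ev \<Rightarrow> 'q) \<Rightarrow> 'ev set \<Rightarrow> real" where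
  "E2DPath Ev E2DCooc Sub tau piTau T =
     (\<Sum>p\<in>piTau ` T. average {e\<in>Ev. piTau e = p} (\<lambda>e. E2DCooc (Sub e) (tau e)))"

definition submodular_on :: "'a set \<Rightarrow> ('a set \<Rightarrow> real) \<Rightarrow> bool" where
  "submodular_on E f \<longleftrightarrow>
     (\<forall>A B e. A \<subseteq> B \<and> B \<subseteq> E \<and> e \<in> E - B \<longrightarrow>
        f (A \<union> {e}) - f A \<ge> f (B \<union> {e}) - f B)"

definition monotone_set_fun_on :: "'a set \<Rightarrow> ('a set \<Rightarrow> real) \<Rightarrow> bool" where
  "monotone_set_fun_on E f \<longleftrightarrow> (\<forall>A B. A \<subseteq> B \<and> B \<subseteq> E \<longrightarrow> f A \<le> f B)"

end

theory Submission
  imports Defs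
begin


definition good :: "'a set \<Rightarrow> ('a set \<Rightarrow> real) \<Rightarrow> bool" where
  "good E F \<longleftrightarrow> monotone_set_fun_on E F \<and> submodular_on E F \<and> (\<forall>T. T \<subseteq> E \<longrightarrow> F T \<ge> 0)"

lemma gain: "finite A \<Longrightarrow> sum (h::_\<Rightarrow>real) (g ` (A \<union> {e})) - sum h (g ` A) = (if g e \<in> g ` A then 0 else h (g e))"
  by (simp add: insert_absorb)

lemma good_cov:
  assumes fin: "finite E" and hn: "\<And>x. h x \<ge> (0::real)"
  shows "good E (\<lambda>T. sum h (g ` T))"
  unfolding good_def monotone_set_fun_on_def submodular_on_def
proof (intro conjI allI impI)
  fix A B assume ab: "A \<subseteq> B \<and> B \<subseteq> E"
  have fB: "finite (g ` B)" using ab fin by (meson finite_imageI finite_subset)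
  have sub: "g ` A \<subseteq> g ` B" using ab by (simp add: image_mono)
  show "sum h (g ` A) \<le> sum h (g ` B)"
    by (rule sum_mono2[OF fB sub]) (simp add: hn)
next
  fix A B e assume a: "A \<subseteq> B \<and> B \<subseteq> E \<and> e \<in> E - B"
  have fB: "finite B" using a fin by (meson finite_subset)
  have fA: "finite A" using a fB by (meson finite_subset)
  have sub: "g ` A \<subseteq> g ` B" using a by (simp add: image_mono)
  have ge: "0 \<le> h (g e)" by (rule hn)
  show "sum h (g ` (B \<union> {e})) - sum h (g ` B) \<le> sum h (g ` (A \<union> {e})) - sum h (g ` A)"
    unfolding gain[OF fA, of h g e] gain[OF fB, of h g e]
    using sub ge by (cases "g e \<in> g ` B"; cases "g e \<in> g ` A") auto
next
  fix T assume "T \<subseteq> E" then show "0 \<le> sum h (g ` T)" by (simp add: sum_nonneg hn)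
qed

lemma goodI:
  assumes "\<And>A B. A \<subseteq> B \<Longrightarrow> B \<subseteq> E \<Longrightarrow> F A \<le> F B"
    and "\<And>A B e. A \<subseteq> B \<Longrightarrow> B \<subseteq> E \<Longrightarrow> e \<in> E - B \<Longrightarrow> F (B \<union> {e}) - F B \<le> F (A \<union> {e}) - F A"
    and "\<And>T. T \<subseteq> E \<Longrightarrow> 0 \<le> F T"
  shows "good E F"
  unfolding good_def monotone_set_fun_on_def submodular_on_def using assms by blast

lemma goodD:
  assumes "good E F"
  shows "\<And>A B. A \<subseteq> B \<Longrightarrow> B \<subseteq> E \<Longrightarrow> F A \<le> F B"
    and "\<And>A B e. A \<subseteq> B \<Longrightarrow> B \<subseteq> E \<Longrightarrow> e \<in> E - B \<Longrightarrow> F (B \<union> {e}) - F B \<le> F (A \<union> {e}) - F A"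
    and "\<And>T. T \<subseteq> E \<Longrightarrow> 0 \<le> F T"
  using assms unfolding good_def monotone_set_fun_on_def submodular_on_def by blast+

lemma good_scale:
  assumes a: "good E F" and c: "(c::real) \<ge> 0"
  shows "good E (\<lambda>T. c * F T)"
proof (rule goodI)
  fix A B assume "A \<subseteq> B" "B \<subseteq> E"
  then show "c * F A \<le> c * F B" by (rule mult_left_mono[OF goodD(1)[OF a] c])
next
  fix A B e assume h: "A \<subseteq> B" "B \<subseteq> E" "e \<in> E - B"
  have "c * (F (B \<union> {e}) - F B) \<le> c * (F (A \<union> {e}) - F A)"
    by (rule mult_left_mono[OF goodD(2)[OF a h] c])
  then show "c * F (B \<union> {e}) - c * F B \<le> c * F (A \<union> {e}) - c * F A" by (simp only: right_diff_distrib)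
next
  fix T assume "T \<subseteq> E"
  then show "0 \<le> c * F T" by (rule mult_nonneg_nonneg[OF c goodD(3)[OF a]])
qed

lemma good_add:
  assumes a: "good E F" and b: "good E G"
  shows "good E (\<lambda>T. F T + G T)"
proof (rule goodI)
  fix A B assume h: "A \<subseteq> B" "B \<subseteq> E"
  show "F A + G A \<le> F B + G B" by (rule add_mono[OF goodD(1)[OF a h] goodD(1)[OF b h]])
next
  fix A B e assume h: "A \<subseteq> B" "B \<subseteq> E" "e \<in> E - B"
  have 1: "F (B \<union> {e}) - F B \<le> F (A \<union> {e}) - F A" by (rule goodD(2)[OF a h])
  have 2: "G (B \<union> {e}) - G B \<le> G (A \<union> {e}) - G A" by (rule goodD(2)[OF b h])
  show "F (B \<union> {e}) + G (B \<union> {e}) - (F B + G B) \<le> F (A \<union> {e}) + G (A \<union> {e}) - (F A + G A)"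
    using 1 2 by linarith
next
  fix T assume h: "T \<subseteq> E"
  show "0 \<le> F T + G T" by (rule add_nonneg_nonneg[OF goodD(3)[OF a h] goodD(3)[OF b h]])
qed

theorem theorem1:
  fixes Ev E :: "'ev set"
    and s :: 'ent
    and Sub RE :: "'ev \<Rightarrow> 'ent"
    and tau :: "'ev \<Rightarrow> real"
    and piRE :: "'ev \<Rightarrow> 'p"
    and piTau :: "'ev \<Rightarrow> 'q"
    and E2ECooc :: "'ent \<Rightarrow> 'ent \<Rightarrow> real"
    and E2DCooc :: "'ent \<Rightarrow> real \<Rightarrow> real"
    and GI :: "'ent \<Rightarrow> real"
    and lambda we1 we2 we3 wd1 wd2 :: real
    and f :: "'ev set \<Rightarrow> real"
  assumes "finite Ev" and "E \<subseteq> Ev"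
    and "\<forall>e\<in>E. Sub e = s"
    and "\<And>x y. E2ECooc x y \<ge> 0"
    and "\<And>x t. E2DCooc x t \<ge> 0"
    and "\<And>x. GI x \<ge> 0"
    and "0 \<le> lambda" "lambda \<le> 1"
    and "we1 \<ge> 0" "we2 \<ge> 0" "we3 \<ge> 0" "wd1 \<ge> 0" "wd2 \<ge> 0"
    and f_def: "\<And>T. f T =
        lambda * (we1 * E2E E2ECooc RE s T + we2 * E2EPath Ev E2ECooc Sub RE piRE T
                  + we3 * G2E GI RE T)
      + (1 - lambda) * (wd1 * E2D E2DCooc tau s T + wd2 * E2DPath Ev E2DCooc Sub tau piTau T)"
  shows "monotone_set_fun_on E f \<and> submodular_on E f \<and> (\<forall>T. T \<subseteq> E \<longrightarrow> f T \<ge> 0)"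
  proof -
  have fE: "finite E" using assms(1,2) finite_subset by blast
  have avg: "\<And>A (k::'ev\<Rightarrow>real). (\<And>x. k x \<ge> 0) \<Longrightarrow> average A k \<ge> 0"
    unfolding average_def by (simp add: sum_nonneg)
  have g1: "good E (E2E E2ECooc RE s)"
  proof -
    have "good E (\<lambda>T. sum (E2ECooc s) (RE ` T))" by (rule good_cov[OF fE]) (rule assms(4))
    moreover have "(\<lambda>T. sum (E2ECooc s) (RE ` T)) = E2E E2ECooc RE s" by (rule ext) (simp add: E2E_def)
    ultimately show ?thesis by (simp only:)
  qed
  have g2: "good E (E2EPath Ev E2ECooc Sub RE piRE)"
  proof -
    have "good E (\<lambda>T. sum (\<lambda>p. average {e\<in>Ev. piRE e = p} (\<lambda>e. E2ECooc (Sub e) (RE e))) (piRE ` T))"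
      by (rule good_cov[OF fE]) (rule avg, rule assms(4))
    moreover have "(\<lambda>T. sum (\<lambda>p. average {e\<in>Ev. piRE e = p} (\<lambda>e. E2ECooc (Sub e) (RE e))) (piRE ` T)) = E2EPath Ev E2ECooc Sub RE piRE"
      by (rule ext) (simp add: E2EPath_def)
    ultimately show ?thesis by (simp only:)
  qed
  have g3: "good E (G2E GI RE)"
  proof -
    have "good E (\<lambda>T. sum GI (RE ` T))" by (rule good_cov[OF fE]) (rule assms(6))
    moreover have "(\<lambda>T. sum GI (RE ` T)) = G2E GI RE" by (rule ext) (simp add: G2E_def)
    ultimately show ?thesis by (simp only:)
  qed
  have g4: "good E (E2D E2DCooc tau s)"
  proof -
    have "good E (\<lambda>T. sum (E2DCooc s) (tau ` T))" by (rule good_cov[OF fE]) (rule assms(5))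
    moreover have "(\<lambda>T. sum (E2DCooc s) (tau ` T)) = E2D E2DCooc tau s" by (rule ext) (simp add: E2D_def)
    ultimately show ?thesis by (simp only:)
  qed
  have g5: "good E (E2DPath Ev E2DCooc Sub tau piTau)"
  proof -
    have "good E (\<lambda>T. sum (\<lambda>p. average {e\<in>Ev. piTau e = p} (\<lambda>e. E2DCooc (Sub e) (tau e))) (piTau ` T))"
      by (rule good_cov[OF fE]) (rule avg, rule assms(5))
    moreover have "(\<lambda>T. sum (\<lambda>p. average {e\<in>Ev. piTau e = p} (\<lambda>e. E2DCooc (Sub e) (tau e))) (piTau ` T)) = E2DPath Ev E2DCooc Sub tau piTau"
      by (rule ext) (simp add: E2DPath_def)
    ultimately show ?thesis by (simp only:)
  qed
  have l1: "1 - lambda \<ge> 0" using assms(8) by simp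
  have a1: "good E (\<lambda>T. we1 * E2E E2ECooc RE s T + we2 * E2EPath Ev E2ECooc Sub RE piRE T)"
    by (rule good_add[OF good_scale[OF g1 assms(9)] good_scale[OF g2 assms(10)]])
  have a2: "good E (\<lambda>T. we1 * E2E E2ECooc RE s T + we2 * E2EPath Ev E2ECooc Sub RE piRE T
                  + we3 * G2E GI RE T)"
    by (rule good_add[OF a1 good_scale[OF g3 assms(11)]])
  have a3: "good E (\<lambda>T. wd1 * E2D E2DCooc tau s T + wd2 * E2DPath Ev E2DCooc Sub tau piTau T)"
    by (rule good_add[OF good_scale[OF g4 assms(12)] good_scale[OF g5 assms(13)]])
  have a4: "good E (\<lambda>T. lambda * (we1 * E2E E2ECooc RE s T + we2 * E2EPath Ev E2ECooc Sub RE piRE T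
                  + we3 * G2E GI RE T)
      + (1 - lambda) * (wd1 * E2D E2DCooc tau s T + wd2 * E2DPath Ev E2DCooc Sub tau piTau T))"
    by (rule good_add[OF good_scale[OF a2 assms(7)] good_scale[OF a3 l1]])
  have feq: "f = (\<lambda>T. lambda * (we1 * E2E E2ECooc RE s T + we2 * E2EPath Ev E2ECooc Sub RE piRE T
                  + we3 * G2E GI RE T)
      + (1 - lambda) * (wd1 * E2D E2DCooc tau s T + wd2 * E2DPath Ev E2DCooc Sub tau piTau T))"
    by (rule ext) (rule f_def)
  have "good E f" by (subst feq) (rule a4)
  then show ?thesis unfolding good_def by assumption
qed

end
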